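(* Let $G=(K\cup I,E)$ be a split graph and let $L\subseteq K$, $J\subseteq I$ (possibly empty). Then $L\cup J$ is free in the vertex shelling antimatroid of $G$ if and only if either there is no edge between $L$ and $J$, or there exists a vertex $h\in J$ such that $L\subseteq N(h)$ and $N(J\setminus\{h\})\subseteq N(h)\setminus L$.
   Context: A split graph $G=(K\cup I,E)$ is a finite simple graph whose vertex set $V=K\cup I$ comes with a fixed partition into a clique $K$ and an independent set $I$. For $X\subseteq V$, $N(X)$ is the set of vertices of $V\setminus X$ adjacent to some vertex of $X$, and $N(v)=N(\{v\})$. A vertex is simplicial if its neighbours induce a clique. The vertex shelling antimatroid of $G$ is $(V,\mathcal{F})$ where $F\subseteq V$ is feasible iff there is an ordering $f_1,\dots,f_{|F|}$ of $F$ such that each $f_j$ is simplicial in $G$ minus $\{f_1,\dots,f_{j-1}\}$ (the empty set is feasible). The trace of $\mathcal{F}$ on $X\subseteq V$ is $\{F\cap X:F\in\mathcal{F}\}$, and $X$ is free if its trace equals $2^X$. *)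

theory Defs
  imports Main
begin

definition simple_graph :: "'a set \<Rightarrow> ('a \<Rightarrow> 'a \<Rightarrow> bool) \<Rightarrow> bool" where
  "simple_graph V adj \<longleftrightarrow> finite V \<and> (\<forall>x y. adj x y \<longrightarrow> adj y x)
     \<and> (\<forall>x. \<not> adj x x) \<and> (\<forall>x y. adj x y \<longrightarrow> x \<in> V \<and> y \<in> V)"

definition split_graph :: "'a set \<Rightarrow> ('a \<Rightarrow> 'a \<Rightarrow> bool) \<Rightarrow> 'a set \<Rightarrow> 'a set \<Rightarrow> bool" where
  "split_graph V adj K I \<longleftrightarrow> simple_graph V adj \<and> V = K \<union> I \<and> K \<inter> I = {}
     \<and> (\<forall>x\<in>K. \<forall>y\<in>K. x \<noteq> y \<longrightarrow> adj x y)
     \<and> (\<forall>x\<in>I. \<forall>y\<in>I. \<not> adj x y)"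

definition nbhd :: "'a set \<Rightarrow> ('a \<Rightarrow> 'a \<Rightarrow> bool) \<Rightarrow> 'a set \<Rightarrow> 'a set" where
  "nbhd V adj X = {v \<in> V - X. \<exists>x\<in>X. adj x v}"

definition simplicial_in :: "'a set \<Rightarrow> ('a \<Rightarrow> 'a \<Rightarrow> bool) \<Rightarrow> 'a set \<Rightarrow> 'a \<Rightarrow> bool" where
  "simplicial_in V adj D v \<longleftrightarrow> v \<in> V - D \<and>
     (\<forall>x\<in>nbhd (V - D) adj {v}. \<forall>y\<in>nbhd (V - D) adj {v}. x \<noteq> y \<longrightarrow> adj x y)"

definition shelling_feasible :: "'a set \<Rightarrow> ('a \<Rightarrow> 'a \<Rightarrow> bool) \<Rightarrow> 'a set \<Rightarrow> bool" where
  "shelling_feasible V adj F \<longleftrightarrow> (\<exists>fs. distinct fs \<and> set fs = F \<and>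
     (\<forall>j < length fs. simplicial_in V adj (set (take j fs)) (fs ! j)))"

definition shelling_antimatroid :: "'a set \<Rightarrow> ('a \<Rightarrow> 'a \<Rightarrow> bool) \<Rightarrow> 'a set set" where
  "shelling_antimatroid V adj = {F. shelling_feasible V adj F}"

definition trace :: "'a set set \<Rightarrow> 'a set \<Rightarrow> 'a set set" where
  "trace \<F> X = {F \<inter> X | F. F \<in> \<F>}"

definition free_in :: "'a set set \<Rightarrow> 'a set \<Rightarrow> bool" where
  "free_in \<F> X \<longleftrightarrow> trace \<F> X = Pow X"

end

theory Submission
  imports Defs
begin

lemma feas_empty: "shelling_feasible V adj {}"
  unfolding shelling_feasible_def by (rule exI[of _ "[]"]) simp

lemma feas_step:
  assumes "shelling_feasible V adj D" "simplicial_in V adj D v"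
  shows "shelling_feasible V adj (insert v D)"
proof -
  obtain fs where fs: "distinct fs" "set fs = D"
    "\<forall>j<length fs. simplicial_in V adj (set (take j fs)) (fs ! j)"
    using assms(1) unfolding shelling_feasible_def by blast
  have vD: "v \<notin> D" using assms(2) unfolding simplicial_in_def by blast
  show ?thesis unfolding shelling_feasible_def
  proof (intro exI[of _ "fs @ [v]"] conjI allI impI)
    show "distinct (fs @ [v])" using fs vD by simp
    show "set (fs @ [v]) = insert v D" using fs by auto
    fix j assume j: "j < length (fs @ [v])"
    show "simplicial_in V adj (set (take j (fs @ [v]))) ((fs @ [v]) ! j)"
    proof (cases "j < length fs")
      case True thus ?thesis using fs(3) by (simp add: nth_append)
    next
      case False
      then have "j = length fs" using j by simp
      thus ?thesis using assms(2) fs(2) by simp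
    qed
  qed
qed

lemma feas_extend:
  assumes "shelling_feasible V adj D" "finite S"
    "\<And>T v. T \<subseteq> S \<Longrightarrow> v \<in> S - T \<Longrightarrow> simplicial_in V adj (D \<union> T) v"
  shows "shelling_feasible V adj (D \<union> S)"
  using assms(2,3)
proof (induction S rule: finite_induct)
  case empty thus ?case using assms(1) by simp
next
  case (insert x S)
  have "shelling_feasible V adj (D \<union> S)" using insert.IH insert.prems by blast
  moreover have "simplicial_in V adj (D \<union> S) x" using insert.prems[of S x] insert.hyps by blast
  ultimately show ?case using feas_step by fastforce
qed

lemma simp_I:
  assumes "split_graph V adj K I" "v \<in> I" "v \<notin> D"
  shows "simplicial_in V adj D v"
  using assms unfolding split_graph_def simple_graph_def simplicial_in_def nbhd_def
  by blast

lemma simp_K: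
  assumes "split_graph V adj K I" "v \<in> K" "v \<notin> D"
    "\<And>i. i \<in> I \<Longrightarrow> i \<notin> D \<Longrightarrow> adj v i \<Longrightarrow> i = h \<and> (\<forall>k\<in>K-D. k \<noteq> v \<longrightarrow> adj h k)"
  shows "simplicial_in V adj D v"
proof -
  note sg = assms(1)[unfolded split_graph_def simple_graph_def]
  show ?thesis unfolding simplicial_in_def nbhd_def
  proof (intro conjI ballI impI)
    show "v \<in> V - D" using sg assms(2,3) by blast
    fix x y assume x: "x \<in> {u \<in> V - D - {v}. \<exists>w\<in>{v}. adj w u}"
      and y: "y \<in> {u \<in> V - D - {v}. \<exists>w\<in>{v}. adj w u}" and xy: "x \<noteq> y"
    show "adj x y"
    proof (cases "x \<in> I")
      case True
      then have "x = h" and hk: "\<forall>k\<in>K-D. k \<noteq> v \<longrightarrow> adj h k" using assms(4)[of x] x by auto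
      have "y \<notin> I" using assms(4)[of y] y xy \<open>x = h\<close> by auto
      then have "y \<in> K - D" using y sg by blast
      thus ?thesis using hk \<open>x = h\<close> y by auto
    next
      case False
      then have xK: "x \<in> K" using x sg by blast
      show ?thesis
      proof (cases "y \<in> I")
        case True
        then have "y = h" and hk: "\<forall>k\<in>K-D. k \<noteq> v \<longrightarrow> adj h k" using assms(4)[of y] y by auto
        then have "adj y x" using xK x by auto
        thus ?thesis using sg by blast
      next
        case False
        then have "y \<in> K" using y sg by blast
        thus ?thesis using xK xy sg by blast
      qed
    qed
  qed
qed

lemma simp_use:
  assumes "simplicial_in V adj D v" "x \<in> V - D" "y \<in> V - D" "x \<noteq> v" "y \<noteq> v"
    "adj v x" "adj v y" "x \<noteq> y"
  shows "adj x y"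
  using assms unfolding simplicial_in_def nbhd_def by blast

theorem mainTheorem15:
  fixes V K I L J :: "'a set" and adj :: "'a \<Rightarrow> 'a \<Rightarrow> bool"
  assumes "split_graph V adj K I" and "L \<subseteq> K" and "J \<subseteq> I"
  shows "free_in (shelling_antimatroid V adj) (L \<union> J) \<longleftrightarrow>
    (\<not> (\<exists>l\<in>L. \<exists>j\<in>J. adj l j)) \<or>
    (\<exists>h\<in>J. L \<subseteq> nbhd V adj {h} \<and> nbhd V adj (J - {h}) \<subseteq> nbhd V adj {h} - L)"
proof -
  note sg = assms(1)[unfolded split_graph_def simple_graph_def]
  from sg have finV: "finite V" and sym: "\<And>x y. adj x y \<Longrightarrow> adj y x"
    and inV: "\<And>x y. adj x y \<Longrightarrow> x \<in> V \<and> y \<in> V" and VKI: "V = K \<union> I" and KI: "K \<inter> I = {}"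
    and cl: "\<And>x y. x\<in>K \<Longrightarrow> y\<in>K \<Longrightarrow> x\<noteq>y \<Longrightarrow> adj x y"
    and ind: "\<And>x y. x\<in>I \<Longrightarrow> y\<in>I \<Longrightarrow> \<not>adj x y" by auto
  let ?X = "L \<union> J"
  have free_iff: "free_in (shelling_antimatroid V adj) ?X \<longleftrightarrow>
     (\<forall>S\<subseteq>?X. \<exists>F. shelling_feasible V adj F \<and> F \<inter> ?X = S)"
    unfolding free_in_def trace_def shelling_antimatroid_def
  proof (intro iffI allI impI)
    fix S assume "{F \<inter> ?X |F. F \<in> {F. shelling_feasible V adj F}} = Pow ?X" "S \<subseteq> ?X"
    then have "S \<in> {F \<inter> ?X |F. F \<in> {F. shelling_feasible V adj F}}" by blast
    thus "\<exists>F. shelling_feasible V adj F \<and> F \<inter> ?X = S" by blast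
  qed auto
  show ?thesis
  proof
    assume free: "free_in (shelling_antimatroid V adj) ?X"
    have wit: "\<exists>fs p. distinct fs \<and> p < length fs \<and> fs!p = l \<and>
        (\<forall>i<length fs. simplicial_in V adj (set (take i fs)) (fs!i)) \<and> set (take p fs) \<inter> ?X = {}"
      if l: "l \<in> L" for l
    proof -
      have "{l} \<subseteq> ?X" using l by blast
      then obtain F where F: "shelling_feasible V adj F" "F \<inter> ?X = {l}" using free free_iff by blast
      then obtain fs where fs: "distinct fs" "set fs = F"
        "\<forall>j<length fs. simplicial_in V adj (set (take j fs)) (fs ! j)"
        unfolding shelling_feasible_def by blast
      have "l \<in> set fs" using F fs by auto
      then obtain p where p: "p < length fs" "fs!p = l" by (meson in_set_conv_nth)
      have sub: "set (take p fs) \<subseteq> F" using fs(2) set_take_subset by metis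
      have "l \<notin> set (take p fs)"
      proof
        assume "l \<in> set (take p fs)"
        then obtain q where q: "q < length (take p fs)" "take p fs ! q = l" by (meson in_set_conv_nth)
        then have "q < p" "fs ! q = fs ! p" using p by auto
        then show False using nth_eq_iff_index_eq[OF fs(1)] p by fastforce
      qed
      then have "set (take p fs) \<inter> ?X = {}" using sub F(2) by auto
      thus ?thesis using fs p by blast
    qed
    show "(\<not> (\<exists>l\<in>L. \<exists>j\<in>J. adj l j)) \<or>
      (\<exists>h\<in>J. L \<subseteq> nbhd V adj {h} \<and> nbhd V adj (J - {h}) \<subseteq> nbhd V adj {h} - L)"
    proof (cases "\<exists>l\<in>L. \<exists>j\<in>J. adj l j")
      case False thus ?thesis by blast
    next
      case True
      then obtain l0 h where l0: "l0 \<in> L" and h: "h \<in> J" and l0h: "adj l0 h" by blast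
      obtain fs0 p0 where w0: "distinct fs0" "p0 < length fs0" "fs0!p0 = l0"
        "\<forall>i<length fs0. simplicial_in V adj (set (take i fs0)) (fs0!i)"
        "set (take p0 fs0) \<inter> ?X = {}" using wit[OF l0] by blast
      define D0 where "D0 = set (take p0 fs0)"
      have s0: "simplicial_in V adj D0 l0" using w0 D0_def by metis
      have hV: "h \<in> V" "h \<in> I" using h assms VKI by auto
      have LN: "L \<subseteq> nbhd V adj {h}"
      proof
        fix l assume l: "l \<in> L"
        have "adj h l"
        proof (cases "l = l0")
          case True thus ?thesis using l0h sym by blast
        next
          case False
          have "adj l h"
          proof (rule simp_use[OF s0])
            show "l \<in> V - D0" using l w0(5) D0_def assms(2) VKI by blast
            show "h \<in> V - D0" using h hV w0(5) D0_def by blast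
            show "l \<noteq> l0" by fact
            show "h \<noteq> l0" using hV l0 assms(2) KI by blast
            show "adj l0 l" using cl l l0 assms(2) False by blast
            show "adj l0 h" by fact
            show "l \<noteq> h" using hV l assms(2) KI by blast
          qed
          thus ?thesis using sym by blast
        qed
        moreover have "l \<noteq> h" using hV l assms(2) KI by blast
        moreover have "l \<in> V" using l assms(2) VKI by blast
        ultimately show "l \<in> nbhd V adj {h}" unfolding nbhd_def by blast
      qed
      have noadj: "\<not> adj l j" if l: "l \<in> L" and j: "j \<in> J" and jh: "j \<noteq> h" for l j
      proof
        assume lj: "adj l j"
        obtain fs p where w: "distinct fs" "p < length fs" "fs!p = l"
          "\<forall>i<length fs. simplicial_in V adj (set (take i fs)) (fs!i)"
          "set (take p fs) \<inter> ?X = {}" using wit[OF l] by blast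
        have s: "simplicial_in V adj (set (take p fs)) l" using w by metis
        have "adj h j"
        proof (rule simp_use[OF s])
          show "h \<in> V - set (take p fs)" using h hV w(5) by blast
          show "j \<in> V - set (take p fs)" using j assms(3) VKI w(5) by blast
          show "h \<noteq> l" using hV l assms(2) KI by blast
          show "j \<noteq> l" using j l assms KI by blast
          show "adj l h" using LN l sym unfolding nbhd_def by blast
          show "adj l j" by fact
          show "h \<noteq> j" using jh by simp
        qed
        thus False using ind hV j assms(3) by blast
      qed
      have "nbhd V adj (J - {h}) \<subseteq> nbhd V adj {h} - L"
      proof
        fix x assume x: "x \<in> nbhd V adj (J - {h})"
        then obtain j where j: "j \<in> J" "j \<noteq> h" "adj j x" and xV: "x \<in> V"
          unfolding nbhd_def by blast
        have xK: "x \<in> K" using x j ind assms(3) VKI xV by blast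
        have xL: "x \<notin> L" using noadj j sym by blast
        have xh: "x \<noteq> h" using xK hV KI by blast
        have "adj h x"
        proof (rule ccontr)
          assume nhx: "\<not> adj h x"
          have xl0: "x \<noteq> l0" using xL l0 by blast
          show False
          proof (cases "x \<in> D0")
            case False
            have "adj x h"
            proof (rule simp_use[OF s0])
              show "x \<in> V - D0" using xV False by blast
              show "h \<in> V - D0" using h hV w0(5) D0_def by blast
              show "x \<noteq> l0" by fact
              show "h \<noteq> l0" using hV l0 assms(2) KI by blast
              show "adj l0 x" using cl xK l0 assms(2) xl0 by blast
              show "adj l0 h" by fact
              show "x \<noteq> h" by fact
            qed
            thus False using nhx sym by blast
          next
            case True
            then obtain q where q: "q < length (take p0 fs0)" "take p0 fs0 ! q = x"
              unfolding D0_def by (meson in_set_conv_nth)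
            then have qp: "q < p0" "fs0 ! q = x" using w0(2) by auto
            define D' where "D' = set (take q fs0)"
            have "D' \<subseteq> D0" unfolding D'_def D0_def
              using qp(1) by (simp add: set_take_subset_set_take)
            have s': "simplicial_in V adj D' x" using w0(4) qp w0(2) D'_def by fastforce
            have "adj j l0"
            proof (rule simp_use[OF s'])
              show "j \<in> V - D'" using j assms(3) VKI w0(5) D0_def \<open>D' \<subseteq> D0\<close> by blast
              show "l0 \<in> V - D'" using l0 assms(2) VKI w0(5) D0_def \<open>D' \<subseteq> D0\<close> by blast
              show "j \<noteq> x" using xK j assms(3) KI by blast
              show "l0 \<noteq> x" using xl0 by simp
              show "adj x j" using j sym by blast
              show "adj x l0" using cl xK l0 assms(2) xl0 by blast
              show "j \<noteq> l0" using j l0 assms KI by blast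
            qed
            thus False using noadj[OF l0 j(1) j(2)] sym by blast
          qed
        qed
        thus "x \<in> nbhd V adj {h} - L" using xV xh xL unfolding nbhd_def by blast
      qed
      thus ?thesis using h LN by blast
    qed
  next
    assume rhs: "(\<not> (\<exists>l\<in>L. \<exists>j\<in>J. adj l j)) \<or>
      (\<exists>h\<in>J. L \<subseteq> nbhd V adj {h} \<and> nbhd V adj (J - {h}) \<subseteq> nbhd V adj {h} - L)"
    have finsub: "finite A" if "A \<subseteq> V" for A using finV that finite_subset by blast
    show "free_in (shelling_antimatroid V adj) ?X"
      unfolding free_iff
    proof (intro allI impI)
      fix S assume S: "S \<subseteq> ?X"
      define A where "A = S \<inter> L"
      define B where "B = S \<inter> J"
      define D1 where "D1 = (I - J) \<union> B"
      have f1: "shelling_feasible V adj D1"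
      proof -
        have "shelling_feasible V adj ({} \<union> D1)"
        proof (rule feas_extend[OF feas_empty])
          show "finite D1" using finsub D1_def B_def assms(3) VKI by blast
          fix T v assume "T \<subseteq> D1" "v \<in> D1 - T"
          then show "simplicial_in V adj ({} \<union> T) v"
            using simp_I[OF assms(1)] D1_def B_def assms(3) by blast
        qed
        thus ?thesis by simp
      qed
      have finA: "finite A" using finsub A_def assms(2) VKI by blast
      show "\<exists>F. shelling_feasible V adj F \<and> F \<inter> ?X = S"
        using rhs
      proof
        assume noe: "\<not> (\<exists>l\<in>L. \<exists>j\<in>J. adj l j)"
        have "shelling_feasible V adj (D1 \<union> A)"
        proof (rule feas_extend[OF f1 finA])
          fix T v assume T: "T \<subseteq> A" "v \<in> A - T"
          show "simplicial_in V adj (D1 \<union> T) v"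
          proof (rule simp_K[OF assms(1), where h = v])
            show "v \<in> K" using T A_def assms(2) by blast
            show "v \<notin> D1 \<union> T" using T A_def assms(2) KI D1_def B_def assms(3) by blast
            fix i assume "i \<in> I" "i \<notin> D1 \<union> T" "adj v i"
            then show "i = v \<and> (\<forall>k\<in>K - (D1 \<union> T). k \<noteq> v \<longrightarrow> adj v k)"
              using noe T A_def D1_def by blast
          qed
        qed
        moreover have "(D1 \<union> A) \<inter> ?X = S"
          using S A_def B_def D1_def assms(2,3) KI by blast
        ultimately show ?thesis by blast
      next
        assume "\<exists>h\<in>J. L \<subseteq> nbhd V adj {h} \<and> nbhd V adj (J - {h}) \<subseteq> nbhd V adj {h} - L"
        then obtain h where h: "h \<in> J" and LN: "L \<subseteq> nbhd V adj {h}"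
          and JN: "nbhd V adj (J - {h}) \<subseteq> nbhd V adj {h} - L" by blast
        have hI: "h \<in> I" using h assms(3) by blast
        define D2 where "D2 = D1 \<union> (K - nbhd V adj {h})"
        have f2: "shelling_feasible V adj D2" unfolding D2_def
        proof (rule feas_extend[OF f1])
          show "finite (K - nbhd V adj {h})" using finsub VKI by blast
          fix T v assume T: "T \<subseteq> K - nbhd V adj {h}" "v \<in> K - nbhd V adj {h} - T"
          show "simplicial_in V adj (D1 \<union> T) v"
          proof (rule simp_K[OF assms(1), where h = h])
            show "v \<in> K" using T by blast
            show "v \<notin> D1 \<union> T" using T KI D1_def B_def assms(3) by blast
            fix i assume i: "i \<in> I" "i \<notin> D1 \<union> T" "adj v i"
            have vV: "v \<in> V" "v \<noteq> h" using T VKI hI KI by auto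
            have "i \<in> J" using i D1_def by blast
            show "i = h \<and> (\<forall>k\<in>K - (D1 \<union> T). k \<noteq> v \<longrightarrow> adj h k)"
            proof (cases "i = h")
              case True
              then have "v \<in> nbhd V adj {h}" using i vV sym unfolding nbhd_def by blast
              thus ?thesis using T by blast
            next
              case False
              have "v \<notin> J - {h}" using vV T KI assms(3) by blast
              then have "v \<in> nbhd V adj (J - {h})" using i \<open>i \<in> J\<close> False vV sym
                unfolding nbhd_def by blast
              thus ?thesis using JN T by blast
            qed
          qed
        qed
        have "shelling_feasible V adj (D2 \<union> A)"
        proof (rule feas_extend[OF f2 finA])
          fix T v assume T: "T \<subseteq> A" "v \<in> A - T"
          have vL: "v \<in> L" using T A_def by blast
          show "simplicial_in V adj (D2 \<union> T) v"
          proof (rule simp_K[OF assms(1), where h = h])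
            show "v \<in> K" using vL assms(2) by blast
            show "v \<notin> D2 \<union> T" using T vL LN assms(2) KI D1_def D2_def B_def assms(3) by blast
            fix i assume i: "i \<in> I" "i \<notin> D2 \<union> T" "adj v i"
            have "i \<in> J" using i D1_def D2_def by blast
            have "i = h"
            proof (rule ccontr)
              assume "i \<noteq> h"
              have "v \<in> V" "v \<notin> J - {h}" using vL assms(2,3) VKI KI by auto
              then have "v \<in> nbhd V adj (J - {h})" using i \<open>i \<in> J\<close> \<open>i \<noteq> h\<close> sym
                unfolding nbhd_def by blast
              thus False using JN vL by blast
            qed
            moreover have "\<forall>k\<in>K - (D2 \<union> T). k \<noteq> v \<longrightarrow> adj h k"
              using D2_def unfolding nbhd_def by blast
            ultimately show "i = h \<and> (\<forall>k\<in>K - (D2 \<union> T). k \<noteq> v \<longrightarrow> adj h k)" by blast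
          qed
        qed
        moreover have "(D2 \<union> A) \<inter> ?X = S"
          using S A_def B_def D1_def D2_def LN assms(2,3) KI by blast
        ultimately show ?thesis by blast
      qed
    qed
  qed
qed

end
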